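(* For every $n\ge1$, $N\in\mathbb{N}$, $f\in\mathcal{E}_N$ and $a\ge\sqrt{n}\sqrt{2N+1}$, $$\int_{|x|\ge a}|f(x)|^2\,dx\le\frac{2^n n^{3/2}}{\sqrt{\pi}}\,\frac{e^{-\frac{a^2}{2n}}}{a}\,8^N\,\|f\|_{L^2(\mathbb{R}^n)}^2.$$
   Context: The one-dimensional Hermite functions are $\phi_k(x)=\frac{(-1)^k}{\sqrt{2^k k!\sqrt{\pi}}}e^{x^2/2}\frac{d^k}{dx^k}(e^{-x^2})$, $k\in\mathbb{N}$. For $\alpha\in\mathbb{N}^n$, $\Phi_\alpha(x)=\prod_{j=1}^n\phi_{\alpha_j}(x_j)$ and $|\alpha|=\alpha_1+\dots+\alpha_n$. $\mathcal{E}_N=\mathrm{Span}_{\mathbb{C}}\{\Phi_\alpha:|\alpha|\le N\}$. $|x|$ is the Euclidean norm. *)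

theory Defs
  imports "HOL-Analysis.Analysis"
begin

definition hermite_fun :: "nat \<Rightarrow> real \<Rightarrow> real" where
  "hermite_fun k x = (-1) ^ k / sqrt (2 ^ k * fact k * sqrt pi)
      * exp (x\<^sup>2 / 2) * (deriv ^^ k) (\<lambda>t. exp (- (t\<^sup>2))) x"

text \<open>Multi-dimensional Hermite functions on R^n (index type 'n, n = CARD('n)),
  multi-index alpha : 'n => nat.\<close>
definition hermite_multi :: "('n::finite \<Rightarrow> nat) \<Rightarrow> real ^ 'n \<Rightarrow> real" where
  "hermite_multi \<alpha> x = (\<Prod>j\<in>UNIV. hermite_fun (\<alpha> j) (x $ j))"

definition multi_indices_le :: "nat \<Rightarrow> ('n::finite \<Rightarrow> nat) set" where
  "multi_indices_le N = {\<alpha>. (\<Sum>j\<in>UNIV. \<alpha> j) \<le> N}"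

definition hermite_space :: "nat \<Rightarrow> (real ^ 'n::finite \<Rightarrow> complex) set" where
  "hermite_space N = {f. \<exists>c :: ('n \<Rightarrow> nat) \<Rightarrow> complex.
      f = (\<lambda>x. \<Sum>\<alpha>\<in>multi_indices_le N. c \<alpha> * complex_of_real (hermite_multi \<alpha> x))}"

end

theory Submission
  imports Defs "HOL-Probability.Distributions" "HOL-Computational_Algebra.Polynomial"
begin

fun hp :: "nat \<Rightarrow> real poly" where
  "hp 0 = 1"
| "hp (Suc k) = [:0,2:] * hp k - pderiv (hp k)"

lemma deriv_iter:
  "(deriv ^^ k) (\<lambda>t. exp (- (t\<^sup>2))) = (\<lambda>x. (-1)^k * poly (hp k) x * exp (- (x\<^sup>2)))"
proof (induction k)
  case 0
  then show ?case by simp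
next
  case (Suc k)
  have D: "((\<lambda>x. (-1)^k * poly (hp k) x * exp (- (x\<^sup>2))) has_real_derivative
       (-1)^(Suc k) * poly (hp (Suc k)) x * exp (- (x\<^sup>2))) (at x)" for x
    by (auto intro!: derivative_eq_intros poly_DERIV simp: algebra_simps power2_eq_square)
  have "(deriv ^^ Suc k) (\<lambda>t. exp (- (t\<^sup>2))) = deriv (\<lambda>x. (-1)^k * poly (hp k) x * exp (- (x\<^sup>2)))"
    by (simp only: funpow.simps comp_def Suc.IH)
  also have "\<dots> = (\<lambda>x. (-1)^(Suc k) * poly (hp (Suc k)) x * exp (- (x\<^sup>2)))"
    by (rule ext, rule DERIV_imp_deriv[OF D])
  finally show ?case .
qed

definition hc :: "nat \<Rightarrow> real" where
  "hc k = 1 / sqrt (2 ^ k * fact k * sqrt pi)"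

lemma hermite_fun_eq: "hermite_fun k x = hc k * poly (hp k) x * exp (- (x\<^sup>2) / 2)"
proof -
  have "exp (x\<^sup>2 / 2) * exp (- (x\<^sup>2)) = exp (- (x\<^sup>2) / 2)"
    by (simp add: exp_add[symmetric])
  moreover have "((-1::real)^k) * (-1)^k = 1"
    by (simp add: power_mult_distrib[symmetric])
  ultimately show ?thesis
    unfolding hermite_fun_def deriv_iter hc_def
    by (simp add: field_simps)
qed

definition Mv :: "nat \<Rightarrow> real" where
  "Mv m = (if even m then sqrt pi * fact m / (2 ^ m * fact (m div 2)) else 0)"

lemma gmoment: "has_bochner_integral lborel (\<lambda>x. exp (- (x\<^sup>2)) * x ^ m) (Mv m)"
proof (cases "even m")
  case True
  then obtain k where k: "m = 2 * k" by (auto elim: evenE)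
  have "has_bochner_integral lborel (\<lambda>x. exp (-x\<^sup>2)*x^(2 * k))
      (sqrt pi * (fact (2 * k) / (2 ^ (2 * k) * fact k)))"
    using has_bochner_integral_even_function[OF gaussian_moment_even_pos[where k=k]] by simp
  then show ?thesis using k by (simp add: Mv_def)
next
  case False
  then obtain k where k: "m = 2 * k + 1" by (auto elim: oddE)
  have "has_bochner_integral lborel (\<lambda>x. exp (- x\<^sup>2) * x^(2 * k + 1)::real) 0"
    using gaussian_moment_odd_pos by (rule has_bochner_integral_odd_function) simp
  then show ?thesis using k by (simp add: Mv_def)
qed

lemma Mv_rec: "real (Suc m) * Mv m = 2 * Mv (Suc (Suc m))"
proof (cases "even m")
  case True
  then obtain k where k: "m = 2 * k" by (auto elim: evenE)
  have e: "Suc (Suc (2*k)) div 2 = Suc k" by simp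
  show ?thesis using k unfolding Mv_def
    by (simp add: e field_simps del: fact_Suc) (simp add: field_simps)
qed (simp add: Mv_def)

lemma Mv_1: "Mv 1 = 0" by (simp add: Mv_def)
lemma Mv_0: "Mv 0 = sqrt pi" by (simp add: Mv_def)

definition L :: "real poly \<Rightarrow> real" where
  "L q = integral\<^sup>L lborel (\<lambda>x. poly q x * exp (- (x\<^sup>2)))"

lemma L_monom: "has_bochner_integral lborel (\<lambda>x. poly (monom c i) x * exp (- (x\<^sup>2))) (c * Mv i)"
proof -
  have "has_bochner_integral lborel (\<lambda>x. c * (exp (- (x\<^sup>2)) * x ^ i)) (c * Mv i)"
    by (intro has_bochner_integral_mult_right gmoment)
  then show ?thesis by (simp add: poly_monom mult_ac)
qed

lemma L_int: "integrable lborel (\<lambda>x. poly (q::real poly) x * exp (- (x\<^sup>2)))"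
proof -
  have eq: "(\<lambda>x. poly q x * exp (- (x\<^sup>2))) = (\<lambda>x. \<Sum>i\<le>degree q. poly (monom (coeff q i) i) x * exp (- (x\<^sup>2)))"
    by (subst (1) poly_as_sum_of_monoms[symmetric]) (simp add: poly_sum sum_distrib_right)
  show ?thesis unfolding eq
    by (rule Bochner_Integration.integrable_sum, rule integrable.intros, rule L_monom)
qed

lemma L_add: "L (p + q) = L p + L q"
  unfolding L_def by (simp add: distrib_right L_int)
lemma L_diff: "L (p - q) = L p - L q"
  unfolding L_def by (simp add: left_diff_distrib L_int)
lemma L_smult: "L (smult c p) = c * L p"
  unfolding L_def by (simp add: mult.assoc)
lemma L_sum: "L (\<Sum>i\<in>A. p i) = (\<Sum>i\<in>A. L (p i))"
  by (induction A rule: infinite_finite_induct) (simp_all add: L_add, simp_all add: L_def)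
lemma L_monom': "L (monom c i) = c * Mv i"
  unfolding L_def using L_monom by (rule has_bochner_integral_integral_eq)

lemma pderiv_sum': "pderiv (\<Sum>i\<in>A. f i) = (\<Sum>i\<in>A. pderiv (f i))"
  by (induction A rule: infinite_finite_induct) (simp_all add: pderiv_add)

lemma L_key_monom: "L (pderiv (monom c i)) = L ([:0,2:] * monom c i)"
proof -
  have m: "[:0,2:] * monom c i = monom (2*c) (Suc i)"
    by (simp add: monom_Suc mult.commute smult_monom)
  have r: "L ([:0,2:] * monom c i) = 2*c*Mv (Suc i)"
    unfolding m by (rule L_monom')
  have l: "L (pderiv (monom c i)) = of_nat i * c * Mv (i - 1)"
    unfolding pderiv_monom by (rule L_monom')
  show ?thesis unfolding r l
  proof (cases i)
    case 0 then show "of_nat i * c * Mv (i - 1) = 2*c*Mv (Suc i)" by (simp add: Mv_def)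
  next
    case (Suc j)
    then show "of_nat i * c * Mv (i - 1) = 2*c*Mv (Suc i)" using arg_cong[OF Mv_rec[of j], of "(*) c"] by (simp add: algebra_simps)
  qed
qed

lemma L_key: "L (pderiv q) = L ([:0,2:] * q)"
proof -
  have "L (pderiv q) = L (pderiv (\<Sum>i\<le>degree q. monom (coeff q i) i))"
    by (simp add: poly_as_sum_of_monoms)
  also have "\<dots> = (\<Sum>i\<le>degree q. L ([:0,2:] * monom (coeff q i) i))"
    by (simp add: pderiv_sum' L_sum L_key_monom)
  also have "\<dots> = L ([:0,2:] * (\<Sum>i\<le>degree q. monom (coeff q i) i))"
    by (simp add: sum_distrib_left L_sum)
  finally show ?thesis by (simp add: poly_as_sum_of_monoms)
qed

lemma L_hp: "L (q * hp k) = L ((pderiv ^^ k) q)"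
proof (induction k arbitrary: q)
  case 0 then show ?case by simp
next
  case (Suc k)
  have "L (q * hp (Suc k)) = L ([:0,2:] * (q * hp k)) - L (q * pderiv (hp k))"
    by (simp add: L_diff[symmetric] algebra_simps)
  also have "\<dots> = L (pderiv (q * hp k)) - L (q * pderiv (hp k))"
    by (simp add: L_key)
  also have "\<dots> = L (pderiv q * hp k)"
    by (simp add: pderiv_mult L_add mult.commute)
  also have "\<dots> = L ((pderiv ^^ k) (pderiv q))" by (rule Suc.IH)
  also have "\<dots> = L ((pderiv ^^ Suc k) q)" by (simp only: funpow_Suc_right comp_def)
  finally show ?case .
qed

lemma hp_deg: "degree (hp k) \<le> k \<and> coeff (hp k) k = 2 ^ k"
proof (induction k)
  case 0 then show ?case by simp
next
  case (Suc k)
  have d1: "degree ([:0,2:] * hp k) \<le> Suc k"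
    using degree_mult_le[of "[:0,2:]" "hp k"] Suc.IH by simp
  have d2: "degree (pderiv (hp k)) \<le> Suc k"
    using Suc.IH[THEN conjunct1] by (simp add: degree_pderiv)
  have "degree (hp (Suc k)) \<le> Suc k"
    using degree_diff_le[OF d1 d2] by simp
  moreover have "coeff (hp (Suc k)) (Suc k) = 2 ^ Suc k"
    using Suc.IH by (simp add: coeff_pderiv coeff_eq_0)
  ultimately show ?case by simp
qed

lemma pderiv_iter: "degree (p::real poly) \<le> k \<Longrightarrow> (pderiv ^^ k) p = [:fact k * coeff p k:]"
proof (induction k arbitrary: p)
  case 0
  then show ?case by (simp add: degree_0_id)
next
  case (Suc k)
  have "degree (pderiv p) \<le> k" using Suc.prems by (simp add: degree_pderiv)
  then have "(pderiv ^^ k) (pderiv p) = [:fact k * coeff (pderiv p) k:]" by (rule Suc.IH)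
  moreover have "(pderiv ^^ Suc k) p = (pderiv ^^ k) (pderiv p)" by (simp only: funpow_Suc_right comp_def)
  ultimately show ?case by (simp add: coeff_pderiv algebra_simps)
qed

lemma L_const: "L [:c:] = c * sqrt pi"
  using L_monom'[of c 0] by (simp add: Mv_0 monom_0)

lemma L_hp_hp_le: "j \<le> k \<Longrightarrow> L (hp j * hp k) = (if j = k then 2 ^ k * fact k * sqrt pi else 0)"
proof -
  assume jk: "j \<le> k"
  have "L (hp j * hp k) = L [:fact k * coeff (hp j) k:]"
    using L_hp[of "hp j" k] pderiv_iter[of "hp j" k] hp_deg[of j] jk by simp
  moreover have "j < k \<Longrightarrow> coeff (hp j) k = 0"
    using hp_deg[of j] by (intro coeff_eq_0) simp
  ultimately show ?thesis using hp_deg[of k] jk by (auto simp: L_const)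
qed

lemma L_hp_hp: "L (hp j * hp k) = (if j = k then 2 ^ k * fact k * sqrt pi else 0)"
  by (cases "j \<le> k") (use L_hp_hp_le[of j k] L_hp_hp_le[of k j] in \<open>auto simp: mult.commute\<close>)

lemma hermite_prod_eq:
  "hermite_fun j x * hermite_fun k x = hc j * hc k * (poly (hp j * hp k) x * exp (- (x\<^sup>2)))"
proof -
  have "exp (- (x\<^sup>2) / 2) * exp (- (x\<^sup>2) / 2) = exp (- (x\<^sup>2))"
    by (simp add: exp_add[symmetric])
  then show ?thesis unfolding hermite_fun_eq by (simp add: algebra_simps)
qed

lemma hc_sq: "hc k * hc k * (2 ^ k * fact k * sqrt pi) = 1"
proof -
  have "0 < (2::real) ^ k * fact k * sqrt pi" by simp
  then show ?thesis unfolding hc_def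
    by (simp add: real_sqrt_mult[symmetric])
qed

lemma hermite_int: "integrable lborel (\<lambda>x. hermite_fun j x * hermite_fun k x)"
  unfolding hermite_prod_eq by (intro integrable_mult_right L_int)

lemma hermite_orth: "integral\<^sup>L lborel (\<lambda>x. hermite_fun j x * hermite_fun k x) = (if j = k then 1 else 0)"
proof -
  have "integral\<^sup>L lborel (\<lambda>x. hermite_fun j x * hermite_fun k x) = hc j * hc k * L (hp j * hp k)"
    unfolding hermite_prod_eq L_def by simp
  then show ?thesis using hc_sq[of k] by (simp add: L_hp_hp)
qed

declare hp.simps(2)[simp del]

lemma hp_pderiv: "pderiv (hp (Suc k)) = smult (2 * real (Suc k)) (hp k)"
proof (induction k)
  case 0
  then show ?case by (simp add: pderiv_pCons hp.simps(2))
next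
  case (Suc k)
  define H where "H = hp (Suc k)"
  have IH: "pderiv H = smult (2 * real (Suc k)) (hp k)" using Suc.IH by (simp add: H_def)
  have "pderiv (hp (Suc (Suc k))) = pderiv ([:0,2:] * H) - pderiv (pderiv H)"
    by (simp add: H_def pderiv_diff hp.simps(2))
  also have "\<dots> = [:0,2:] * pderiv H + smult 2 H - pderiv (pderiv H)"
    by (simp add: pderiv_mult pderiv_pCons pderiv_smult)
  also have "\<dots> = smult (2 * real (Suc k)) ([:0,2:] * hp k - pderiv (hp k)) + smult 2 H"
    by (simp add: IH pderiv_smult algebra_simps smult_diff_right)
  also have "\<dots> = smult (2 * real (Suc k) + 2) H"
    unfolding smult_add_left by (simp add: H_def hp.simps(2))
  also have "\<dots> = smult (2 * real (Suc (Suc k))) H"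
    by simp
  finally show ?case by (simp add: H_def)
qed

lemma hp_rec: "poly (hp (Suc (Suc k))) x = 2 * x * poly (hp (Suc k)) x - 2 * real (Suc k) * poly (hp k) x"
  by (simp only: hp.simps(2)[of "Suc k"] hp_pderiv) (simp add: algebra_simps)

lemma hp_bound_aux:
  fixes t :: real
  shows "(2 * real k \<le> t\<^sup>2 \<longrightarrow> \<bar>poly (hp k) t\<bar> \<le> (2*\<bar>t\<bar>)^k * (5/4)^k) \<and>
         (2 * real (Suc k) \<le> t\<^sup>2 \<longrightarrow> \<bar>poly (hp (Suc k)) t\<bar> \<le> (2*\<bar>t\<bar>)^(Suc k) * (5/4)^(Suc k))"
proof (induction k)
  case 0
  then show ?case by (simp add: abs_mult hp.simps(2))
next
  case (Suc k)
  show ?case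
  proof (intro conjI impI)
    assume "2 * real (Suc k) \<le> t\<^sup>2"
    then show "\<bar>poly (hp (Suc k)) t\<bar> \<le> (2*\<bar>t\<bar>)^(Suc k) * (5/4)^(Suc k)"
      using Suc.IH by blast
  next
    assume h: "2 * real (Suc (Suc k)) \<le> t\<^sup>2"
    define A where "A = 2 * \<bar>t\<bar>"
    define R where "R = (5/4::real)"
    define X where "X = A^k * R^k"
    have A0: "0 \<le> A" and R0: "0 \<le> R" by (auto simp: A_def R_def)
    have X0: "0 \<le> X" using A0 R0 by (simp add: X_def)
    have a: "\<bar>poly (hp (Suc k)) t\<bar> \<le> A^(Suc k) * R^(Suc k)"
      using Suc.IH h by (auto simp: A_def R_def)
    have b: "\<bar>poly (hp k) t\<bar> \<le> X"
      using Suc.IH h by (auto simp: A_def R_def X_def)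
    have A2: "A\<^sup>2 = 4 * t\<^sup>2" by (simp add: A_def power_mult_distrib)
    have "\<bar>poly (hp (Suc (Suc k))) t\<bar> \<le> \<bar>2 * t\<bar> * \<bar>poly (hp (Suc k)) t\<bar> + 2 * real (Suc k) * \<bar>poly (hp k) t\<bar>"
    proof -
      have "\<bar>2 * t * p1 - c * p0\<bar> \<le> \<bar>2 * t\<bar> * \<bar>p1\<bar> + c * \<bar>p0\<bar>" if "0 \<le> c" for p1 p0 c :: real
        using abs_triangle_ineq4[of "2*t*p1" "c*p0"] that by (simp add: abs_mult)
      then show ?thesis unfolding hp_rec by simp
    qed
    also have "\<dots> = A * \<bar>poly (hp (Suc k)) t\<bar> + 2 * real (Suc k) * \<bar>poly (hp k) t\<bar>"
      by (simp add: A_def abs_mult)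
    also have "\<dots> \<le> A * (A^(Suc k) * R^(Suc k)) + 2 * real (Suc k) * X"
      by (intro add_mono mult_left_mono a b A0) simp
    also have "\<dots> = X * (A\<^sup>2 * R) + 2 * real (Suc k) * X"
      by (simp add: X_def power2_eq_square)
    also have "\<dots> \<le> X * (A\<^sup>2 * R) + X * (A\<^sup>2 * R * (R - 1))"
    proof -
      have "2 * real (Suc k) \<le> A\<^sup>2 * R * (R - 1)"
        using h unfolding A2 R_def by simp
      then show ?thesis using X0 by (simp add: mult.commute mult_left_mono)
    qed
    also have "\<dots> = A^(Suc (Suc k)) * R^(Suc (Suc k))"
      by (simp add: X_def power2_eq_square algebra_simps)
    finally show "\<bar>poly (hp (Suc (Suc k))) t\<bar> \<le> (2*\<bar>t\<bar>)^(Suc (Suc k)) * (5/4)^(Suc (Suc k))"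
      by (simp add: A_def R_def)
  qed
qed

lemma hp_bound: "2 * real k \<le> t\<^sup>2 \<Longrightarrow> \<bar>poly (hp k) t\<bar> \<le> (2*\<bar>t\<bar>)^k * (5/4)^k"
  using hp_bound_aux by blast

lemma half_tail:
  fixes b :: real
  assumes b0: "0 \<le> b"
  shows "has_bochner_integral lborel (\<lambda>x. indicator {b..} x * (x * exp (- (x\<^sup>2) / 2))) (exp (- (b\<^sup>2) / 2))"
proof (rule has_bochner_integral_nn_integral)
  show "(\<lambda>x. indicator {b..} x * (x * exp (- (x\<^sup>2) / 2))) \<in> borel_measurable lborel" by measurable
  show "AE x in lborel. 0 \<le> indicator {b..} x * (x * exp (- (x\<^sup>2) / 2))"
    using b0 by (intro AE_I2) (simp split: split_indicator)
  show "0 \<le> exp (- (b\<^sup>2) / 2)" by simp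
  have "(\<integral>\<^sup>+x. ennreal (indicator {b..} x * (x * exp (- (x\<^sup>2) / 2))) \<partial>lborel)
      = (\<integral>\<^sup>+x. ennreal (x * exp (- (x\<^sup>2) / 2)) * indicator {b..} x \<partial>lborel)"
    by (intro nn_integral_cong) (simp split: split_indicator)
  also have "\<dots> = ennreal (0 - (- exp (- (b\<^sup>2) / 2)))"
  proof (rule nn_integral_FTC_atLeast)
    show "(\<lambda>x::real. x * exp (- (x\<^sup>2) / 2)) \<in> borel_measurable borel" by measurable
    show "DERIV (\<lambda>x::real. - exp (- (x\<^sup>2) / 2)) x :> x * exp (- (x\<^sup>2) / 2)" for x
      by (auto intro!: derivative_eq_intros simp: algebra_simps)
    show "0 \<le> x * exp (- (x\<^sup>2) / 2)" if "b \<le> x" for x :: real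
      using b0 that by simp
    have L0: "LIM x at_top. (1/2) * (x::real)^2 :> at_top"
      by (intro filterlim_tendsto_pos_mult_at_top[OF tendsto_const] filterlim_pow_at_top filterlim_ident) auto
    have L1: "LIM x at_top. (x::real)\<^sup>2 / 2 :> at_top"
      using L0 by (simp add: field_simps)
    have "((\<lambda>x::real. exp (- ((x\<^sup>2) / 2))) \<longlongrightarrow> 0) at_top"
      by (rule filterlim_compose[OF exp_at_bot filterlim_compose[OF filterlim_uminus_at_bot_at_top L1]])
    then have "((\<lambda>x::real. - exp (- (x\<^sup>2) / 2)) \<longlongrightarrow> - 0) at_top"
      by (intro tendsto_minus) simp
    then show "((\<lambda>x::real. - exp (- (x\<^sup>2) / 2)) \<longlongrightarrow> 0) at_top" by simp
  qed
  finally show "(\<integral>\<^sup>+x. ennreal (indicator {b..} x * (x * exp (- (x\<^sup>2) / 2))) \<partial>lborel) = ennreal (exp (- (b\<^sup>2) / 2))"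
    by simp
qed

lemma full_tail:
  fixes b :: real
  assumes b0: "0 \<le> b"
  shows "has_bochner_integral lborel (\<lambda>t. indicator {t. b \<le> \<bar>t\<bar>} t * (\<bar>t\<bar> * exp (- (t\<^sup>2) / 2))) (2 * exp (- (b\<^sup>2) / 2))"
proof -
  have "has_bochner_integral lborel (\<lambda>x. indicator {0..} x *\<^sub>R (indicator {t. b \<le> \<bar>t\<bar>} x * (\<bar>x\<bar> * exp (- (x\<^sup>2) / 2)))) (exp (- (b\<^sup>2) / 2))"
    using half_tail[OF b0] by (rule has_bochner_integral_cong[THEN iffD1, rotated 3])
       (use b0 in \<open>auto split: split_indicator\<close>)
  from has_bochner_integral_even_function[OF this] show ?thesis by (simp add: indicator_def)
qed

lemma decay:
  fixes b s :: real
  assumes b0: "0 < b" and bs: "b \<le> s" and kb: "2 * real k \<le> b\<^sup>2 + 1"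
  shows "s ^ (2*k) * exp (- (s\<^sup>2)) \<le> (b ^ (2*k) * exp (- (b\<^sup>2) / 2) / b) * (s * exp (- (s\<^sup>2) / 2))"
proof -
  have s0: "0 < s" using b0 bs by simp
  have key: "s ^ (2*k) * b * exp (b\<^sup>2 / 2) \<le> b ^ (2*k) * s * exp (s\<^sup>2 / 2)"
  proof (cases k)
    case 0
    have "exp (b\<^sup>2 / 2) \<le> exp (s\<^sup>2 / 2)"
      using b0 bs by (simp add: power_mono)
    then show ?thesis using 0 bs b0 by (simp add: mult_mono)
  next
    case (Suc j)
    define m where "m = 2 * k - 1"
    have k2: "2 * k = Suc m" using Suc by (simp add: m_def)
    define r where "r = s / b"
    have r1: "1 \<le> r" using b0 bs by (simp add: r_def)
    have sbr: "s = b * r" using b0 by (simp add: r_def)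
    have "r ^ m \<le> exp (r - 1) ^ m"
      using r1 exp_ge_add_one_self[of "r - 1"] by (intro power_mono) auto
    also have "\<dots> = exp (real m * (r - 1))" by (simp add: exp_of_nat_mult[symmetric])
    also have "\<dots> \<le> exp ((s\<^sup>2 - b\<^sup>2) / 2)"
    proof -
      have mb: "real m \<le> b\<^sup>2" using kb Suc by (simp add: m_def)
      have "real m * (r - 1) \<le> b\<^sup>2 * (r - 1)" using mb r1 by (intro mult_right_mono) auto
      also have "\<dots> \<le> b\<^sup>2 * (r - 1) * ((r + 1) / 2)"
      proof -
        have nn: "0 \<le> b\<^sup>2 * (r - 1)" using r1 by simp
        show ?thesis using mult_left_mono[of 1 "(r+1)/2" "b\<^sup>2 * (r - 1)"] nn r1 by simp
      qed
      also have "\<dots> = (s\<^sup>2 - b\<^sup>2) / 2" by (simp add: sbr power2_eq_square field_simps)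
      finally show ?thesis by simp
    qed
    finally have rm: "r ^ m \<le> exp ((s\<^sup>2 - b\<^sup>2) / 2)" .
    have "s ^ m = b ^ m * r ^ m" by (simp add: sbr power_mult_distrib)
    also have "\<dots> \<le> b ^ m * exp ((s\<^sup>2 - b\<^sup>2) / 2)" using rm b0 by (simp add: mult_left_mono)
    finally have sm0: "s ^ m \<le> b ^ m * exp ((s\<^sup>2 - b\<^sup>2) / 2)" .
    have ee: "exp ((s\<^sup>2 - b\<^sup>2) / 2) * exp (b\<^sup>2 / 2) = exp (s\<^sup>2 / 2)"
      by (simp add: exp_add[symmetric] diff_divide_distrib)
    have sm: "s ^ m * exp (b\<^sup>2 / 2) \<le> b ^ m * exp (s\<^sup>2 / 2)"
      using mult_right_mono[OF sm0, of "exp (b\<^sup>2 / 2)"] by (simp add: mult.assoc ee)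
    have "s ^ (2*k) * b * exp (b\<^sup>2 / 2) = (s * b) * (s ^ m * exp (b\<^sup>2 / 2))" unfolding k2 by (simp add: algebra_simps)
    also have "\<dots> \<le> (s * b) * (b ^ m * exp (s\<^sup>2 / 2))" using sm s0 b0 by (intro mult_left_mono) auto
    also have "\<dots> = b ^ (2*k) * s * exp (s\<^sup>2 / 2)" unfolding k2 by (simp add: algebra_simps)
    finally show ?thesis .
  qed
  define c where "c = exp (- (s\<^sup>2)) * exp (- (b\<^sup>2) / 2) / b"
  have c0: "0 \<le> c" using b0 by (simp add: c_def)
  have eb: "exp (b\<^sup>2 / 2) * exp (- (b\<^sup>2) / 2) = 1" by (simp add: exp_add[symmetric])
  have es: "exp (s\<^sup>2 / 2) * exp (- (s\<^sup>2)) = exp (- (s\<^sup>2) / 2)" by (simp add: exp_add[symmetric])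
  have "s ^ (2*k) * exp (- (s\<^sup>2)) = (s ^ (2*k) * b * exp (b\<^sup>2 / 2)) * c"
  proof -
    have "(s ^ (2*k) * b * exp (b\<^sup>2 / 2)) * c = s ^ (2*k) * exp (- (s\<^sup>2)) * (exp (b\<^sup>2 / 2) * exp (- (b\<^sup>2) / 2)) * (b / b)"
      unfolding c_def by (simp add: algebra_simps)
    also have "\<dots> = s ^ (2*k) * exp (- (s\<^sup>2))"
    proof -
      have bb: "b / b = 1" using b0 by simp
      show ?thesis by (simp only: eb bb mult_1_right)
    qed
    finally show ?thesis by (rule sym)
  qed
  also have "\<dots> \<le> (b ^ (2*k) * s * exp (s\<^sup>2 / 2)) * c"
    using key c0 by (rule mult_right_mono)
  also have "\<dots> = (b ^ (2*k) * exp (- (b\<^sup>2) / 2) / b) * (s * (exp (s\<^sup>2 / 2) * exp (- (s\<^sup>2))))"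
    unfolding c_def by (simp add: algebra_simps)
  also have "\<dots> = (b ^ (2*k) * exp (- (b\<^sup>2) / 2) / b) * (s * exp (- (s\<^sup>2) / 2))"
    by (simp only: es)
  finally show ?thesis .
qed

lemma kk_aux: "real (Suc m) ^ (Suc m) \<le> exp (real m) * fact (Suc m)"
proof (induction m)
  case 0 then show ?case by simp
next
  case (Suc m)
  define a where "a = real (Suc m)"
  have a0: "0 < a" by (simp add: a_def)
  have "(1 + 1 / a) ^ (Suc m) \<le> exp (1 / a) ^ (Suc m)"
    using exp_ge_add_one_self[of "1/a"] a0 by (intro power_mono) auto
  also have "\<dots> = exp (real (Suc m) * (1/a))" by (simp only: exp_of_nat_mult)
  also have "\<dots> = exp 1" using a0 by (simp add: a_def)
  finally have e1: "(1 + 1 / a) ^ (Suc m) \<le> exp 1" .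
  have aa: "real (Suc (Suc m)) = a * (1 + 1/a)" using a0 by (simp add: a_def field_simps)
  have "real (Suc (Suc m)) ^ Suc m = a ^ Suc m * (1 + 1/a) ^ Suc m"
    by (simp only: aa power_mult_distrib)
  also have "\<dots> \<le> a ^ Suc m * exp 1" using e1 a0 by (intro mult_left_mono) auto
  also have "\<dots> \<le> exp (real m) * fact (Suc m) * exp 1"
    using Suc.IH by (intro mult_right_mono) (auto simp: a_def)
  finally have h: "real (Suc (Suc m)) ^ Suc m \<le> exp (real m) * fact (Suc m) * exp 1" .
  have "real (Suc (Suc m)) ^ Suc (Suc m) = real (Suc (Suc m)) * real (Suc (Suc m)) ^ Suc m" by simp
  also have "\<dots> \<le> real (Suc (Suc m)) * (exp (real m) * fact (Suc m) * exp 1)"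
    using h by (intro mult_left_mono) auto
  also have "\<dots> = exp (real (Suc m)) * fact (Suc (Suc m))"
    by (simp add: exp_add[symmetric] algebra_simps)
  finally show ?case .
qed

lemma num_bound:
  fixes b :: real
  assumes b1: "1 \<le> b"
  shows "2 * (25/4)^k * b ^ (2*k) * exp (- (b\<^sup>2) / 2) \<le> 3/2 * 16^k * fact k"
proof (cases k)
  case 0
  have "exp (- (b\<^sup>2) / 2) \<le> exp (- 1 / 2)" using b1 by (simp add: power_mono)
  also have "\<dots> = 1 / exp (1/2)" by (simp add: exp_minus field_simps)
  also have "\<dots> \<le> 1 / (3/2)"
    using exp_ge_add_one_self[of "1/2"] by (intro divide_left_mono) auto
  finally show ?thesis using 0 by simp
next
  case (Suc m)
  have kpos: "0 < real k" using Suc by simp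
  define y where "y = b\<^sup>2 / (2 * real k)"
  have y0: "0 \<le> y" by (simp add: y_def)
  have "y ^ k \<le> exp (y - 1) ^ k"
    using exp_ge_add_one_self[of "y - 1"] y0 by (intro power_mono) auto
  also have "\<dots> = exp (real k * (y - 1))" by (simp only: exp_of_nat_mult)
  also have "real k * (y - 1) = b\<^sup>2 / 2 - real k" using kpos by (simp add: y_def field_simps)
  finally have "y ^ k \<le> exp (b\<^sup>2 / 2 - real k)" .
  then have yk: "y ^ k \<le> exp (b\<^sup>2 / 2 - real k)" .
  have b2: "b\<^sup>2 = 2 * real k * y" using kpos by (simp add: y_def)
  have bk: "b ^ (2*k) = (2 * real k) ^ k * y ^ k"
    by (simp only: power_mult b2 power_mult_distrib)
  have eexp: "exp (real k - 1) * exp (- real k) = exp (-1)"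
    by (simp add: exp_add[symmetric])
  have "b ^ (2*k) * exp (- (b\<^sup>2) / 2) \<le> (2 * real k) ^ k * exp (b\<^sup>2 / 2 - real k) * exp (- (b\<^sup>2) / 2)"
    unfolding bk using yk by (intro mult_right_mono mult_left_mono) auto
  also have "\<dots> = 2 ^ k * real k ^ k * exp (- real k)"
    by (simp add: power_mult_distrib mult.assoc exp_add[symmetric])
  also have "\<dots> \<le> 2 ^ k * (exp (real k - 1) * fact k) * exp (- real k)"
    using kk_aux[of m] Suc by (intro mult_right_mono mult_left_mono) auto
  also have "\<dots> = 2 ^ k * fact k * (exp (real k - 1) * exp (- real k))"
    by (simp only: ac_simps)
  also have "\<dots> = 2 ^ k * fact k * exp (-1)"
    by (simp only: eexp)
  also have "\<dots> \<le> 2 ^ k * fact k * (1/2)"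
  proof -
    have "exp (-1::real) = 1 / exp 1" by (simp add: exp_minus field_simps)
    also have "\<dots> \<le> 1 / 2" using exp_ge_add_one_self[of 1] by (intro divide_left_mono) auto
    finally show ?thesis by (intro mult_left_mono) auto
  qed
  finally have h: "b ^ (2*k) * exp (- (b\<^sup>2) / 2) \<le> 2 ^ k * fact k / 2" by simp
  have "2 * (25/4)^k * b ^ (2*k) * exp (- (b\<^sup>2) / 2) = 2 * (25/4)^k * (b ^ (2*k) * exp (- (b\<^sup>2) / 2))"
    by simp
  also have "\<dots> \<le> 2 * (25/4)^k * (2 ^ k * fact k / 2)"
    using h by (intro mult_left_mono) auto
  also have "\<dots> = (25/2)^k * fact k" by (simp add: power_mult_distrib[symmetric])
  also have "\<dots> \<le> 3/2 * 16^k * fact k"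
  proof -
    have "(25/2::real)^k \<le> 16^k" by (intro power_mono) auto
    moreover have "(0::real) \<le> 16^k" by simp
    ultimately have "(25/2::real)^k \<le> 3/2 * 16^k" by linarith
    then show ?thesis by (intro mult_right_mono) auto
  qed
  finally show ?thesis .
qed

lemma tail_set_meas: "{t::real. b \<le> \<bar>t\<bar>} \<in> sets lborel"
  by measurable

lemma tail1:
  fixes b :: real
  assumes b1: "1 \<le> b" and kb: "2 * real k + 1 \<le> b\<^sup>2"
  shows "integrable lborel (\<lambda>t. indicator {t. b \<le> \<bar>t\<bar>} t * (hermite_fun k t)\<^sup>2)"
    and "integral\<^sup>L lborel (\<lambda>t. indicator {t. b \<le> \<bar>t\<bar>} t * (hermite_fun k t)\<^sup>2)
           \<le> 3/2 * 8^k * exp (- (b\<^sup>2) / 2) / (sqrt pi * b)"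
proof -
  have b0: "0 < b" using b1 by simp
  define w where "w t = indicator {t. b \<le> \<bar>t\<bar>} t * (\<bar>t\<bar> * exp (- (t\<^sup>2) / 2))" for t :: real
  define K where "K = hc k * hc k * (25/4)^k * (b ^ (2*k) * exp (- (b\<^sup>2) / 2) / b)"
  have wi: "has_bochner_integral lborel w (2 * exp (- (b\<^sup>2) / 2))"
    unfolding w_def using full_tail b0 by simp
  have sq: "(hermite_fun k t)\<^sup>2 = hermite_fun k t * hermite_fun k t" for t by (simp add: power2_eq_square)
  show int1: "integrable lborel (\<lambda>t. indicator {t. b \<le> \<bar>t\<bar>} t * (hermite_fun k t)\<^sup>2)"
    using integrable_mult_indicator[OF tail_set_meas[of b] hermite_int[of k k]] by (simp add: sq)
  have pw: "indicator {t. b \<le> \<bar>t\<bar>} t * (hermite_fun k t)\<^sup>2 \<le> K * w t" for t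
  proof (cases "b \<le> \<bar>t\<bar>")
    case False then show ?thesis by (simp add: w_def)
  next
    case True
    have "b\<^sup>2 \<le> \<bar>t\<bar>\<^sup>2" using True b0 by (intro power_mono) auto
    then have t2: "b\<^sup>2 \<le> t\<^sup>2" by simp
    have hb: "\<bar>poly (hp k) t\<bar> \<le> (2*\<bar>t\<bar>)^k * (5/4)^k"
      using t2 kb by (intro hp_bound) simp
    have e1: "(2*\<bar>t\<bar>)^k * (5/4)^k = (5/2)^k * \<bar>t\<bar>^k"
    proof -
      have "(2*\<bar>t\<bar>)^k * (5/4)^k = (2*\<bar>t\<bar>*(5/4))^k" by (rule power_mult_distrib[symmetric])
      also have "2*\<bar>t\<bar>*(5/4) = (5/2)*\<bar>t\<bar>" by simp
      also have "((5/2)*\<bar>t\<bar>)^k = (5/2)^k * \<bar>t\<bar>^k" by (rule power_mult_distrib)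
      finally show ?thesis .
    qed
    have e2: "((5/2)^k * \<bar>t\<bar>^k)\<^sup>2 = (25/4)^k * \<bar>t\<bar>^(2*k)"
    proof -
      have a1: "((5/2::real)^k)\<^sup>2 = (25/4)^k"
        unfolding power2_eq_square power_mult_distrib[symmetric] by simp
      have a2: "(\<bar>t\<bar>^k)\<^sup>2 = \<bar>t\<bar>^(2*k)" by (simp add: power_even_eq)
      show ?thesis by (simp only: power_mult_distrib a1 a2)
    qed
    have P2: "(poly (hp k) t)\<^sup>2 \<le> (25/4)^k * \<bar>t\<bar>^(2*k)"
    proof -
      have "(poly (hp k) t)\<^sup>2 = \<bar>poly (hp k) t\<bar>\<^sup>2" by simp
      also have "\<dots> \<le> ((5/2)^k * \<bar>t\<bar>^k)\<^sup>2" using power_mono[OF hb[unfolded e1], of 2] by simp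
      finally show ?thesis using e2 by simp
    qed
    have phi2: "(hermite_fun k t)\<^sup>2 = hc k * hc k * ((poly (hp k) t)\<^sup>2 * exp (- (t\<^sup>2)))"
      using hermite_prod_eq[of k t k] by (simp add: sq power2_eq_square)
    have dec: "\<bar>t\<bar> ^ (2*k) * exp (- (t\<^sup>2)) \<le> (b ^ (2*k) * exp (- (b\<^sup>2) / 2) / b) * (\<bar>t\<bar> * exp (- (t\<^sup>2) / 2))"
      using decay[OF b0 True, of k] kb by simp
    have hc0: "0 \<le> hc k * hc k" by simp
    have "(hermite_fun k t)\<^sup>2 \<le> hc k * hc k * ((25/4)^k * \<bar>t\<bar>^(2*k) * exp (- (t\<^sup>2)))"
      unfolding phi2 using P2 hc0 by (intro mult_left_mono mult_right_mono) auto
    also have "\<dots> = hc k * hc k * (25/4)^k * (\<bar>t\<bar>^(2*k) * exp (- (t\<^sup>2)))" by (simp add: mult_ac)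
    also have "\<dots> \<le> hc k * hc k * (25/4)^k * ((b ^ (2*k) * exp (- (b\<^sup>2) / 2) / b) * (\<bar>t\<bar> * exp (- (t\<^sup>2) / 2)))"
      using dec hc0 by (intro mult_left_mono) auto
    also have "\<dots> = K * w t" using True by (simp add: K_def w_def mult_ac)
    finally show ?thesis using True by simp
  qed
  have "integral\<^sup>L lborel (\<lambda>t. indicator {t. b \<le> \<bar>t\<bar>} t * (hermite_fun k t)\<^sup>2) \<le> integral\<^sup>L lborel (\<lambda>t. K * w t)"
    using int1 wi pw by (intro integral_mono) (auto intro: integrable.intros)
  also have "\<dots> = K * (2 * exp (- (b\<^sup>2) / 2))"
    using has_bochner_integral_integral_eq[OF wi] by simp
  also have "\<dots> \<le> 3/2 * 8^k * exp (- (b\<^sup>2) / 2) / (sqrt pi * b)"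
  proof -
    have hcsq: "hc k * hc k = 1 / (2 ^ k * fact k * sqrt pi)"
      using hc_sq[of k] by (simp add: field_simps)
    have nb: "2 * (25/4)^k * b ^ (2*k) * exp (- (b\<^sup>2) / 2) \<le> 3/2 * 16^k * fact k"
      by (rule num_bound[OF b1])
    have "K * (2 * exp (- (b\<^sup>2) / 2)) = hc k * hc k * (2 * (25/4)^k * b ^ (2*k) * exp (- (b\<^sup>2) / 2)) * (exp (- (b\<^sup>2) / 2) / b)"
      by (simp add: K_def mult_ac)
    also have "\<dots> \<le> hc k * hc k * (3/2 * 16^k * fact k) * (exp (- (b\<^sup>2) / 2) / b)"
      using nb b0 by (intro mult_right_mono mult_left_mono) auto
    also have "\<dots> = 3/2 * (16^k / 2^k) * exp (- (b\<^sup>2) / 2) / (sqrt pi * b)"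
      by (simp add: hcsq field_simps)
    also have "\<dots> = 3/2 * 8^k * exp (- (b\<^sup>2) / 2) / (sqrt pi * b)"
    proof -
      have "(16::real)^k / 2^k = 8^k" by (simp add: power_divide[symmetric])
      then show ?thesis by simp
    qed
    finally show ?thesis .
  qed
  finally show "integral\<^sup>L lborel (\<lambda>t. indicator {t. b \<le> \<bar>t\<bar>} t * (hermite_fun k t)\<^sup>2)
           \<le> 3/2 * 8^k * exp (- (b\<^sup>2) / 2) / (sqrt pi * b)" .
qed

lemma integral_lborel_prod:
  fixes f :: "'a::euclidean_space \<Rightarrow> real \<Rightarrow> real"
  assumes int: "\<And>b. b \<in> Basis \<Longrightarrow> integrable lborel (f b)"
  shows "integrable lborel (\<lambda>x::'a. \<Prod>b\<in>Basis. f b (x \<bullet> b))"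
    and "(\<integral>x. (\<Prod>b\<in>Basis. f b (x \<bullet> b)) \<partial>(lborel::'a measure)) = (\<Prod>b\<in>Basis. (\<integral>x. f b x \<partial>lborel))"
proof -
  interpret P: product_sigma_finite "\<lambda>_::'a. lborel::real measure" by standard
  have meas[measurable]: "f b \<in> borel_measurable borel" if "b \<in> Basis" for b
    using int[OF that] by (simp add: borel_measurable_integrable)
  have g[measurable]: "(\<lambda>y. \<Sum>b\<in>Basis. y b *\<^sub>R b) \<in> measurable (\<Pi>\<^sub>M b\<in>Basis. lborel) (borel::'a measure)"
    by measurable
  have eq: "(\<Prod>b'\<in>Basis. f b' ((\<Sum>b\<in>Basis. y b *\<^sub>R b) \<bullet> b')) = (\<Prod>b'\<in>Basis. f b' (y b'))" for y
    by (intro prod.cong refl) (simp add: inner_sum_left inner_Basis if_distrib sum.delta cong: if_cong)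
  have Fm: "(\<lambda>x::'a. \<Prod>b\<in>Basis. f b (x \<bullet> b)) \<in> borel_measurable borel"
    by measurable
  have "integrable (\<Pi>\<^sub>M b\<in>Basis. lborel) (\<lambda>y. \<Prod>b\<in>Basis. f b (y b))"
    by (rule P.product_integrable_prod) (auto intro: int)
  then show "integrable lborel (\<lambda>x::'a. \<Prod>b\<in>Basis. f b (x \<bullet> b))"
    by (subst lborel_eq) (subst integrable_distr_eq[OF g Fm], simp add: eq)
  have "(\<integral>x. (\<Prod>b\<in>Basis. f b (x \<bullet> b)) \<partial>(lborel::'a measure)) = (\<integral>y. (\<Prod>b\<in>Basis. f b (y b)) \<partial>(\<Pi>\<^sub>M b\<in>Basis. lborel))"
    by (subst lborel_eq) (subst integral_distr[OF g Fm], simp add: eq)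
  also have "\<dots> = (\<Prod>b\<in>Basis. (\<integral>x. f b x \<partial>lborel))"
    by (rule P.product_integral_prod) (auto intro: int)
  finally show "(\<integral>x. (\<Prod>b\<in>Basis. f b (x \<bullet> b)) \<partial>(lborel::'a measure)) = (\<Prod>b\<in>Basis. (\<integral>x. f b x \<partial>lborel))" .
qed

lemma integral_vec_prod:
  fixes g :: "'n::finite \<Rightarrow> real \<Rightarrow> real"
  assumes int: "\<And>i. integrable lborel (g i)"
  shows "integrable lborel (\<lambda>x::real^'n. \<Prod>i\<in>UNIV. g i (x $ i))"
    and "(\<integral>x. (\<Prod>i\<in>UNIV. g i (x $ i)) \<partial>(lborel::(real^'n) measure)) = (\<Prod>i\<in>UNIV. (\<integral>x. g i x \<partial>lborel))"
proof -
  define f where "f b = g (SOME i. b = axis i (1::real))" for b :: "real^'n"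
  have fa: "f (axis i 1) = g i" for i
    unfolding f_def by (rule arg_cong[where f=g]) (auto simp: axis_eq_axis)
  have inj: "inj_on (\<lambda>i::'n. axis i (1::real)) UNIV"
    by (auto simp: inj_on_def axis_eq_axis)
  have B: "(Basis :: (real^'n) set) = (\<lambda>i. axis i 1) ` UNIV"
    by (auto simp: Basis_vec_def)
  have P1: "(\<Prod>b\<in>Basis. f b (x \<bullet> b)) = (\<Prod>i\<in>UNIV. g i (x $ i))" for x :: "real^'n"
    unfolding B by (subst prod.reindex[OF inj]) (simp add: fa inner_axis)
  have P2: "(\<Prod>b\<in>Basis. (\<integral>x. f b x \<partial>lborel)) = (\<Prod>i\<in>UNIV. (\<integral>x. g i x \<partial>lborel))"
    unfolding B by (subst prod.reindex[OF inj]) (simp add: fa)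
  have intf: "\<And>b. b \<in> (Basis :: (real^'n) set) \<Longrightarrow> integrable lborel (f b)"
    unfolding B using int fa by auto
  show "integrable lborel (\<lambda>x::real^'n. \<Prod>i\<in>UNIV. g i (x $ i))"
    using integral_lborel_prod(1)[where f=f, OF intf] by (simp add: P1)
  show "(\<integral>x. (\<Prod>i\<in>UNIV. g i (x $ i)) \<partial>(lborel::(real^'n) measure)) = (\<Prod>i\<in>UNIV. (\<integral>x. g i x \<partial>lborel))"
    using integral_lborel_prod(2)[where f=f, OF intf] by (simp add: P1 P2)
qed


lemma multi_orth:
  fixes \<alpha> \<beta> :: "'n::finite \<Rightarrow> nat"
  shows "integrable lborel (\<lambda>x::real^'n. hermite_multi \<alpha> x * hermite_multi \<beta> x)"
    and "integral\<^sup>L lborel (\<lambda>x::real^'n. hermite_multi \<alpha> x * hermite_multi \<beta> x) = (if \<alpha> = \<beta> then 1 else 0)"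
proof -
  have eq: "hermite_multi \<alpha> x * hermite_multi \<beta> x = (\<Prod>i\<in>UNIV. (\<lambda>t. hermite_fun (\<alpha> i) t * hermite_fun (\<beta> i) t) (x $ i))" for x :: "real^'n"
    unfolding hermite_multi_def by (simp add: prod.distrib)
  show "integrable lborel (\<lambda>x::real^'n. hermite_multi \<alpha> x * hermite_multi \<beta> x)"
    unfolding eq by (rule integral_vec_prod(1)) (rule hermite_int)
  have "integral\<^sup>L lborel (\<lambda>x::real^'n. hermite_multi \<alpha> x * hermite_multi \<beta> x)
      = (\<Prod>i\<in>UNIV. integral\<^sup>L lborel (\<lambda>t. hermite_fun (\<alpha> i) t * hermite_fun (\<beta> i) t))"
    unfolding eq by (rule integral_vec_prod(2)) (rule hermite_int)
  also have "\<dots> = (\<Prod>i\<in>UNIV. if \<alpha> i = \<beta> i then 1 else 0)"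
    by (simp add: hermite_orth)
  also have "\<dots> = (if \<alpha> = \<beta> then 1 else 0)"
  proof (cases "\<alpha> = \<beta>")
    case True then show ?thesis by simp
  next
    case False
    then obtain i where "\<alpha> i \<noteq> \<beta> i" by auto
    then show ?thesis using False by (auto simp: prod_zero_iff)
  qed
  finally show "integral\<^sup>L lborel (\<lambda>x::real^'n. hermite_multi \<alpha> x * hermite_multi \<beta> x) = (if \<alpha> = \<beta> then 1 else 0)" .
qed

lemma multi_indices_sub: "multi_indices_le N \<subseteq> Pi\<^sub>E UNIV (\<lambda>_::'n::finite. {..N})"
proof
  fix \<alpha> :: "'n \<Rightarrow> nat" assume "\<alpha> \<in> multi_indices_le N"
  then have s: "(\<Sum>j\<in>UNIV. \<alpha> j) \<le> N" by (simp add: multi_indices_le_def)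
  have "\<alpha> i \<le> N" for i using member_le_sum[of i UNIV \<alpha>] s by simp
  then show "\<alpha> \<in> Pi\<^sub>E UNIV (\<lambda>_. {..N})" by (simp add: PiE_UNIV_domain)
qed

lemma finite_multi_indices: "finite (multi_indices_le N :: ('n::finite \<Rightarrow> nat) set)"
  by (rule finite_subset[OF multi_indices_sub]) (simp add: finite_PiE)

lemma geom4: "(\<Sum>k\<le>N. (4::real)^k) \<le> 4^(Suc N) / 3"
  by (induction N) (simp_all)

lemma geom_half: "(\<Sum>k\<le>N. (1/2::real)^k) = 2 - (1/2)^N"
  by (induction N) (simp_all add: field_simps)

lemma count_bound:
  fixes j :: "'n::finite"
  shows "(\<Sum>\<alpha>\<in>multi_indices_le N. (8::real) ^ (\<alpha> j)) \<le> 2/3 * 2 ^ CARD('n) * 8 ^ N"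
proof -
  define w where "w i k = (if i = j then (4::real)^k else (1/2)^k)" for i :: 'n and k :: nat
  have wpos: "0 \<le> w i k" for i k by (simp add: w_def)
  have pt: "(8::real) ^ (\<alpha> j) \<le> 2 ^ N * (\<Prod>i\<in>UNIV. w i (\<alpha> i))" if "\<alpha> \<in> multi_indices_le N" for \<alpha>
  proof -
    have s: "(\<Sum>i\<in>UNIV. \<alpha> i) \<le> N" using that by (simp add: multi_indices_le_def)
    have sp: "(\<Sum>i\<in>UNIV. \<alpha> i) = \<alpha> j + (\<Sum>i\<in>UNIV - {j}. \<alpha> i)"
      by (simp add: sum.remove)
    have "(\<Prod>i\<in>UNIV. w i (\<alpha> i)) = w j (\<alpha> j) * (\<Prod>i\<in>UNIV - {j}. w i (\<alpha> i))"
      by (simp add: prod.remove)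
    also have "(\<Prod>i\<in>UNIV - {j}. w i (\<alpha> i)) = (\<Prod>i\<in>UNIV - {j}. (1/2::real) ^ (\<alpha> i))"
      by (intro prod.cong) (auto simp: w_def)
    also have "\<dots> = (1/2) ^ (\<Sum>i\<in>UNIV - {j}. \<alpha> i)" by (simp add: power_sum)
    finally have pr: "(\<Prod>i\<in>UNIV. w i (\<alpha> i)) = 4 ^ (\<alpha> j) * (1/2) ^ (\<Sum>i\<in>UNIV - {j}. \<alpha> i)"
      by (simp add: w_def)
    define r where "r = (\<Sum>i\<in>UNIV - {j}. \<alpha> i)"
    have rN: "\<alpha> j + r \<le> N" using s sp by (simp add: r_def)
    have "(8::real) ^ (\<alpha> j) = 4 ^ (\<alpha> j) * 2 ^ (\<alpha> j)"
      by (simp add: power_mult_distrib[symmetric])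
    also have "\<dots> = 4 ^ (\<alpha> j) * (2 ^ (\<alpha> j + r) * (1/2) ^ r)"
      by (simp add: power_add power_one_over)
    also have "\<dots> \<le> 4 ^ (\<alpha> j) * (2 ^ N * (1/2) ^ r)"
      using rN by (intro mult_left_mono mult_right_mono power_increasing) auto
    also have "\<dots> = 2 ^ N * (\<Prod>i\<in>UNIV. w i (\<alpha> i))"
      unfolding pr r_def by simp
    finally show ?thesis .
  qed
  have "(\<Sum>\<alpha>\<in>multi_indices_le N. (8::real) ^ (\<alpha> j)) \<le> (\<Sum>\<alpha>\<in>multi_indices_le N. 2 ^ N * (\<Prod>i\<in>UNIV. w i (\<alpha> i)))"
    using pt by (intro sum_mono) auto
  also have "\<dots> \<le> (\<Sum>\<alpha>\<in>Pi\<^sub>E UNIV (\<lambda>_. {..N}). 2 ^ N * (\<Prod>i\<in>UNIV. w i (\<alpha> i)))"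
    using multi_indices_sub wpos by (intro sum_mono2) (auto simp: finite_PiE intro!: mult_nonneg_nonneg prod_nonneg)
  also have "\<dots> = 2 ^ N * (\<Prod>i\<in>UNIV. \<Sum>k\<le>N. w i k)"
    by (simp add: prod_sum_PiE sum_distrib_left)
  also have "(\<Prod>i\<in>UNIV. \<Sum>k\<le>N. w i k) = (\<Sum>k\<le>N. w j k) * (\<Prod>i\<in>UNIV - {j}. \<Sum>k\<le>N. w i k)"
    by (simp add: prod.remove)
  also have "\<dots> \<le> (4^(Suc N) / 3) * (\<Prod>i\<in>UNIV - {j}. (2::real))"
  proof (intro mult_mono prod_mono conjI)
    show "(\<Sum>k\<le>N. w j k) \<le> 4^(Suc N) / 3" using geom4 by (simp add: w_def)
    fix i assume "i \<in> UNIV - {j}"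
    then have "(\<Sum>k\<le>N. w i k) = 2 - (1/2)^N" by (simp add: w_def geom_half)
    moreover have "(1/2::real)^N \<le> 1" by (rule power_le_one) auto
    ultimately show "0 \<le> (\<Sum>k\<le>N. w i k)" and "(\<Sum>k\<le>N. w i k) \<le> 2" by auto
  qed (auto intro!: sum_nonneg prod_nonneg wpos)
  also have "(\<Prod>i\<in>UNIV - {j}. (2::real)) = 2 ^ (CARD('n) - 1)"
    by (simp add: card_Diff_singleton)
  finally have "(\<Sum>\<alpha>\<in>multi_indices_le N. (8::real) ^ (\<alpha> j)) \<le> 2 ^ N * (4 ^ Suc N / 3 * 2 ^ (CARD('n) - 1))"
    by (simp add: mult_left_mono)
  also have "\<dots> = 2/3 * 2 ^ CARD('n) * 8 ^ N"
  proof -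
    have c: "CARD('n) = Suc (CARD('n) - 1)" by simp
    have "(2::real) ^ CARD('n) = 2 * 2 ^ (CARD('n) - 1)" by (metis c power_Suc)
    moreover have "(8::real) ^ N = 2 ^ N * 4 ^ N" by (simp add: power_mult_distrib[symmetric])
    ultimately show ?thesis by simp
  qed
  finally show ?thesis .
qed

lemma cmod_sq_Re: "(cmod z)\<^sup>2 = Re (z * cnj z)"
  using arg_cong[OF complex_norm_square[of z], of Re] by simp

lemma f_sq_expand:
  fixes c :: "('n::finite \<Rightarrow> nat) \<Rightarrow> complex" and S :: "('n \<Rightarrow> nat) set"
  shows "(cmod (\<Sum>\<alpha>\<in>S. c \<alpha> * complex_of_real (hermite_multi \<alpha> x)))\<^sup>2
       = (\<Sum>\<alpha>\<in>S. \<Sum>\<beta>\<in>S. Re (c \<alpha> * cnj (c \<beta>)) * (hermite_multi \<alpha> x * hermite_multi \<beta> x))"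
proof -
  have "(cmod (\<Sum>\<alpha>\<in>S. c \<alpha> * complex_of_real (hermite_multi \<alpha> x)))\<^sup>2
     = Re ((\<Sum>\<alpha>\<in>S. c \<alpha> * complex_of_real (hermite_multi \<alpha> x)) * (\<Sum>\<beta>\<in>S. cnj (c \<beta>) * complex_of_real (hermite_multi \<beta> x)))"
    by (simp add: cmod_sq_Re cnj_sum)
  also have "\<dots> = Re (\<Sum>\<alpha>\<in>S. \<Sum>\<beta>\<in>S. (c \<alpha> * complex_of_real (hermite_multi \<alpha> x)) * (cnj (c \<beta>) * complex_of_real (hermite_multi \<beta> x)))"
    by (simp add: sum_product)
  also have "\<dots> = (\<Sum>\<alpha>\<in>S. \<Sum>\<beta>\<in>S. Re (c \<alpha> * cnj (c \<beta>)) * (hermite_multi \<alpha> x * hermite_multi \<beta> x))"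
    by (simp add: algebra_simps)
  finally show ?thesis .
qed

lemma f_sq_CS:
  fixes c :: "('n::finite \<Rightarrow> nat) \<Rightarrow> complex" and S :: "('n \<Rightarrow> nat) set"
  shows "(cmod (\<Sum>\<alpha>\<in>S. c \<alpha> * complex_of_real (hermite_multi \<alpha> x)))\<^sup>2
       \<le> (\<Sum>\<alpha>\<in>S. (cmod (c \<alpha>))\<^sup>2) * (\<Sum>\<alpha>\<in>S. (hermite_multi \<alpha> x)\<^sup>2)"
proof -
  have "cmod (\<Sum>\<alpha>\<in>S. c \<alpha> * complex_of_real (hermite_multi \<alpha> x)) \<le> (\<Sum>\<alpha>\<in>S. cmod (c \<alpha>) * \<bar>hermite_multi \<alpha> x\<bar>)"
    using norm_sum[of "\<lambda>\<alpha>. c \<alpha> * complex_of_real (hermite_multi \<alpha> x)" S] by (simp add: norm_mult)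
  then have "(cmod (\<Sum>\<alpha>\<in>S. c \<alpha> * complex_of_real (hermite_multi \<alpha> x)))\<^sup>2 \<le> (\<Sum>\<alpha>\<in>S. cmod (c \<alpha>) * \<bar>hermite_multi \<alpha> x\<bar>)\<^sup>2"
    by (intro power_mono) auto
  also have "\<dots> \<le> (\<Sum>\<alpha>\<in>S. (cmod (c \<alpha>))\<^sup>2) * (\<Sum>\<alpha>\<in>S. \<bar>hermite_multi \<alpha> x\<bar>\<^sup>2)"
    by (rule Cauchy_Schwarz_ineq_sum)
  finally show ?thesis by simp
qed

lemma norm_ge_coord:
  fixes x :: "real^'n::finite" and a :: real
  assumes a0: "0 < a" and ax: "a \<le> norm x"
  shows "\<exists>j. a / sqrt (real CARD('n)) \<le> \<bar>x $ j\<bar>"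
proof (rule ccontr)
  assume "\<not> ?thesis"
  then have lt: "\<bar>x $ j\<bar> < a / sqrt (real CARD('n))" for j using not_le by blast
  have n0: "0 < real CARD('n)" by simp
  have "(x $ j)\<^sup>2 < (a / sqrt (real CARD('n)))\<^sup>2" for j
    using lt[of j] by (metis abs_ge_zero power2_abs power_strict_mono zero_less_numeral)
  then have "(x $ j)\<^sup>2 < a\<^sup>2 / real CARD('n)" for j using n0 by (simp add: power_divide)
  then have "(\<Sum>j\<in>UNIV. (x $ j)\<^sup>2) < (\<Sum>j\<in>(UNIV::'n set). a\<^sup>2 / real CARD('n))"
    by (intro sum_strict_mono) auto
  also have "\<dots> = a\<^sup>2" using n0 by simp
  finally have s: "(\<Sum>j\<in>UNIV. (x $ j)\<^sup>2) < a\<^sup>2" .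
  have "norm x = sqrt (\<Sum>j\<in>UNIV. (x $ j)\<^sup>2)" by (simp add: norm_vec_def L2_set_def)
  also have "\<dots> < sqrt (a\<^sup>2)" using s by (simp only: real_sqrt_less_iff)
  also have "\<dots> = a" using a0 by simp
  finally show False using ax by simp
qed

lemma tail_multi:
  fixes \<alpha> :: "'n::finite \<Rightarrow> nat" and j :: 'n and b :: real
  assumes b1: "1 \<le> b" and kb: "2 * real (\<alpha> j) + 1 \<le> b\<^sup>2"
  shows "integrable lborel (\<lambda>x::real^'n. indicator {x. b \<le> \<bar>x $ j\<bar>} x * (hermite_multi \<alpha> x)\<^sup>2)"
    and "integral\<^sup>L lborel (\<lambda>x::real^'n. indicator {x. b \<le> \<bar>x $ j\<bar>} x * (hermite_multi \<alpha> x)\<^sup>2)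
          \<le> 3/2 * 8^(\<alpha> j) * exp (- (b\<^sup>2) / 2) / (sqrt pi * b)"
proof -
  define g where "g i t = (if i = j then indicator {t. b \<le> \<bar>t\<bar>} t * (hermite_fun (\<alpha> i) t)\<^sup>2 else (hermite_fun (\<alpha> i) t)\<^sup>2)" for i t
  have gj: "g j = (\<lambda>t. indicator {t. b \<le> \<bar>t\<bar>} t * (hermite_fun (\<alpha> j) t)\<^sup>2)"
    unfolding g_def by simp
  have gn: "i \<noteq> j \<Longrightarrow> g i = (\<lambda>t. hermite_fun (\<alpha> i) t * hermite_fun (\<alpha> i) t)" for i
    unfolding g_def by (simp add: power2_eq_square)
  have gi: "integrable lborel (g i)" for i
  proof (cases "i = j")
    case True then show ?thesis using tail1(1)[OF b1 kb] gj by simp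
  next
    case False then show ?thesis using hermite_int[of "\<alpha> i" "\<alpha> i"] gn[OF False] by simp
  qed
  have eq: "indicator {x. b \<le> \<bar>x $ j\<bar>} x * (hermite_multi \<alpha> x)\<^sup>2 = (\<Prod>i\<in>UNIV. g i (x $ i))" for x :: "real^'n"
  proof -
    have "(\<Prod>i\<in>UNIV. g i (x $ i)) = (\<Prod>i\<in>UNIV. (if i = j then indicator {t. b \<le> \<bar>t\<bar>} (x $ j) else 1) * (hermite_fun (\<alpha> i) (x $ i))\<^sup>2)"
      by (intro prod.cong) (auto simp: g_def)
    also have "\<dots> = indicator {t. b \<le> \<bar>t\<bar>} (x $ j) * (\<Prod>i\<in>UNIV. (hermite_fun (\<alpha> i) (x $ i))\<^sup>2)"
      by (simp add: prod.distrib prod.delta)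
    also have "\<dots> = indicator {x. b \<le> \<bar>x $ j\<bar>} x * (hermite_multi \<alpha> x)\<^sup>2"
      by (simp add: hermite_multi_def prod_power_distrib indicator_def)
    finally show ?thesis by simp
  qed
  show "integrable lborel (\<lambda>x::real^'n. indicator {x. b \<le> \<bar>x $ j\<bar>} x * (hermite_multi \<alpha> x)\<^sup>2)"
    unfolding eq by (rule integral_vec_prod(1)[OF gi])
  have "integral\<^sup>L lborel (\<lambda>x::real^'n. indicator {x. b \<le> \<bar>x $ j\<bar>} x * (hermite_multi \<alpha> x)\<^sup>2)
      = (\<Prod>i\<in>UNIV. integral\<^sup>L lborel (g i))"
    unfolding eq by (rule integral_vec_prod(2)[OF gi])
  also have "\<dots> = integral\<^sup>L lborel (g j) * (\<Prod>i\<in>UNIV - {j}. integral\<^sup>L lborel (g i))"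
    by (simp add: prod.remove)
  also have "(\<Prod>i\<in>UNIV - {j}. integral\<^sup>L lborel (g i)) = 1"
  proof (intro prod.neutral ballI)
    fix i assume "i \<in> UNIV - {j}"
    then show "integral\<^sup>L lborel (g i) = 1"
      using hermite_orth[of "\<alpha> i" "\<alpha> i"] gn[of i] by simp
  qed
  also have "integral\<^sup>L lborel (g j) = integral\<^sup>L lborel (\<lambda>t. indicator {t. b \<le> \<bar>t\<bar>} t * (hermite_fun (\<alpha> j) t)\<^sup>2)"
    by (simp add: gj)
  finally show "integral\<^sup>L lborel (\<lambda>x::real^'n. indicator {x. b \<le> \<bar>x $ j\<bar>} x * (hermite_multi \<alpha> x)\<^sup>2)
          \<le> 3/2 * 8^(\<alpha> j) * exp (- (b\<^sup>2) / 2) / (sqrt pi * b)"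
    using tail1(2)[OF b1 kb] by simp
qed

lemma sum_rearr:
  fixes I :: "'j \<Rightarrow> real" and P :: "'a \<Rightarrow> real"
  shows "(\<Sum>j\<in>J. I j) * (C * (\<Sum>\<alpha>\<in>S. P \<alpha>)) = C * (\<Sum>\<alpha>\<in>S. \<Sum>j\<in>J. I j * P \<alpha>)"
  by (simp add: sum_distrib_left sum_distrib_right mult_ac)

theorem mainTheorem9:
  fixes f :: "real ^ 'n::finite \<Rightarrow> complex" and N :: nat and a :: real
  assumes "f \<in> hermite_space N"
    and "a \<ge> sqrt (real CARD('n)) * sqrt (2 * real N + 1)"
  shows "(LINT x : {x. norm x \<ge> a} | lborel. (cmod (f x))\<^sup>2)
    \<le> 2 ^ CARD('n) * real CARD('n) powr (3/2) / sqrt pi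
       * (exp (- (a\<^sup>2) / (2 * real CARD('n))) / a) * 8 ^ N
       * (LINT x | lborel. (cmod (f x))\<^sup>2)"
proof -
  define n where "n = CARD('n)"
  define S where "S = (multi_indices_le N :: ('n \<Rightarrow> nat) set)"
  obtain c where f: "f = (\<lambda>x. \<Sum>\<alpha>\<in>S. c \<alpha> * complex_of_real (hermite_multi \<alpha> x))"
    using assms(1) by (auto simp: hermite_space_def S_def)
  have finS: "finite S" unfolding S_def by (rule finite_multi_indices)
  define C where "C = (\<Sum>\<alpha>\<in>S. (cmod (c \<alpha>))\<^sup>2)"
  have C0: "0 \<le> C" unfolding C_def by (intro sum_nonneg) auto
  have n0: "0 < real n" by (simp add: n_def)
  have age: "sqrt (real n) * sqrt (2 * real N + 1) \<le> a" using assms(2) by (simp add: n_def)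
  have a0: "0 < a"
  proof -
    have "0 < sqrt (real n) * sqrt (2 * real N + 1)" using n0 by simp
    then show ?thesis using age by linarith
  qed
  have a2: "real n * (2 * real N + 1) \<le> a\<^sup>2"
  proof -
    have "(sqrt (real n) * sqrt (2 * real N + 1))\<^sup>2 \<le> a\<^sup>2"
      using age n0 by (intro power_mono) auto
    then show ?thesis using n0 by (simp add: power_mult_distrib)
  qed
  define b where "b = a / sqrt (real n)"
  have b0: "0 < b" using a0 n0 by (simp add: b_def)
  have b2: "b\<^sup>2 = a\<^sup>2 / real n" using n0 by (simp add: b_def power_divide)
  have b2N: "2 * real N + 1 \<le> b\<^sup>2"
  proof -
    have "(2 * real N + 1) * real n \<le> a\<^sup>2" using a2 by (simp add: mult.commute)
    then show ?thesis unfolding b2 using n0 by (simp add: pos_le_divide_eq)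
  qed
  have b1: "1 \<le> b"
  proof -
    have "1 \<le> b\<^sup>2" using b2N by simp
    then show ?thesis using power2_le_imp_le[of 1 b] b0 by simp
  qed
  define A where "A = {x::real^'n. a \<le> norm x}"
  have "closed A" unfolding A_def by (intro closed_Collect_le continuous_intros)
  then have Am: "A \<in> sets lborel" by (simp add: borel_closed)
  have sqf: "(cmod (f x))\<^sup>2 = (\<Sum>\<alpha>\<in>S. \<Sum>\<beta>\<in>S. Re (c \<alpha> * cnj (c \<beta>)) * (hermite_multi \<alpha> x * hermite_multi \<beta> x))" for x
    unfolding f by (rule f_sq_expand)
  have intf: "integrable lborel (\<lambda>x. (cmod (f x))\<^sup>2)"
    unfolding sqf by (intro Bochner_Integration.integrable_sum integrable_mult_right multi_orth(1))
  have normf: "(LINT x | lborel. (cmod (f x))\<^sup>2) = C"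
  proof -
    have "(LINT x | lborel. (cmod (f x))\<^sup>2) = (\<Sum>\<alpha>\<in>S. \<Sum>\<beta>\<in>S. Re (c \<alpha> * cnj (c \<beta>)) * (if \<alpha> = \<beta> then 1 else 0))"
      unfolding sqf
      by (simp add: Bochner_Integration.integral_sum integrable_mult_right multi_orth
          del: mult_cancel_left1 mult_cancel_right1)
    also have "\<dots> = (\<Sum>\<alpha>\<in>S. Re (c \<alpha> * cnj (c \<alpha>)))"
    proof (rule sum.cong[OF refl])
      fix \<alpha> assume "\<alpha> \<in> S"
      have "(\<Sum>\<beta>\<in>S. Re (c \<alpha> * cnj (c \<beta>)) * (if \<alpha> = \<beta> then 1 else 0)) = (\<Sum>\<beta>\<in>S. if \<alpha> = \<beta> then Re (c \<alpha> * cnj (c \<beta>)) else 0)"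
        by (intro sum.cong) auto
      also have "\<dots> = Re (c \<alpha> * cnj (c \<alpha>))" using finS \<open>\<alpha> \<in> S\<close> by (simp add: sum.delta)
      finally show "(\<Sum>\<beta>\<in>S. Re (c \<alpha> * cnj (c \<beta>)) * (if \<alpha> = \<beta> then 1 else 0)) = Re (c \<alpha> * cnj (c \<alpha>))" .
    qed
    also have "\<dots> = C" unfolding C_def by (simp add: cmod_sq_Re)
    finally show ?thesis .
  qed
  define G where "G x = C * (\<Sum>\<alpha>\<in>S. \<Sum>j\<in>UNIV. indicator {x::real^'n. b \<le> \<bar>x $ j\<bar>} x * (hermite_multi \<alpha> x)\<^sup>2)" for x
  have pw: "indicator A x * (cmod (f x))\<^sup>2 \<le> G x" for x
  proof -
    have ind: "(indicator A x :: real) \<le> (\<Sum>j\<in>UNIV. indicator {x::real^'n. b \<le> \<bar>x $ j\<bar>} x)"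
    proof (cases "x \<in> A")
      case True
      then obtain j where j: "b \<le> \<bar>x $ j\<bar>"
        using norm_ge_coord[OF a0, of x] by (auto simp: A_def b_def n_def)
      have "(indicator A x :: real) = indicator {x::real^'n. b \<le> \<bar>x $ j\<bar>} x" using True j by simp
      also have "\<dots> \<le> (\<Sum>j\<in>UNIV. indicator {x::real^'n. b \<le> \<bar>x $ j\<bar>} x)"
        using member_le_sum[of j UNIV "\<lambda>j. indicator {x::real^'n. b \<le> \<bar>x $ j\<bar>} x :: real"] by simp
      finally show ?thesis .
    next
      case False then show ?thesis by (simp add: sum_nonneg)
    qed
    have cs: "(cmod (f x))\<^sup>2 \<le> C * (\<Sum>\<alpha>\<in>S. (hermite_multi \<alpha> x)\<^sup>2)"
      unfolding f C_def by (rule f_sq_CS)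
    have "indicator A x * (cmod (f x))\<^sup>2 \<le> (\<Sum>j\<in>UNIV. indicator {x::real^'n. b \<le> \<bar>x $ j\<bar>} x) * (C * (\<Sum>\<alpha>\<in>S. (hermite_multi \<alpha> x)\<^sup>2))"
      using ind cs by (intro mult_mono) (auto intro: sum_nonneg)
    also have "\<dots> = G x"
      unfolding G_def by (rule sum_rearr)
    finally show ?thesis .
  qed
  have tm: "integrable lborel (\<lambda>x::real^'n. indicator {x. b \<le> \<bar>x $ j\<bar>} x * (hermite_multi \<alpha> x)\<^sup>2)"
    and tb: "integral\<^sup>L lborel (\<lambda>x::real^'n. indicator {x. b \<le> \<bar>x $ j\<bar>} x * (hermite_multi \<alpha> x)\<^sup>2)
          \<le> 3/2 * 8^(\<alpha> j) * exp (- (b\<^sup>2) / 2) / (sqrt pi * b)"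
    if "\<alpha> \<in> S" for \<alpha> j
  proof -
    have "\<alpha> j \<le> N"
      using that multi_indices_sub[of N] by (auto simp: S_def PiE_iff)
    then have kb: "2 * real (\<alpha> j) + 1 \<le> b\<^sup>2" using b2N by simp
    show "integrable lborel (\<lambda>x::real^'n. indicator {x. b \<le> \<bar>x $ j\<bar>} x * (hermite_multi \<alpha> x)\<^sup>2)"
      by (rule tail_multi(1)[where \<alpha>=\<alpha> and j=j, OF b1 kb])
    show "integral\<^sup>L lborel (\<lambda>x::real^'n. indicator {x. b \<le> \<bar>x $ j\<bar>} x * (hermite_multi \<alpha> x)\<^sup>2)
          \<le> 3/2 * 8^(\<alpha> j) * exp (- (b\<^sup>2) / 2) / (sqrt pi * b)"
      by (rule tail_multi(2)[where \<alpha>=\<alpha> and j=j, OF b1 kb])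
  qed
  have intG: "integrable lborel G"
    unfolding G_def using tm by (intro integrable_mult_right Bochner_Integration.integrable_sum) auto
  define B0 where "B0 = exp (- (b\<^sup>2) / 2) / (sqrt pi * b)"
  have B00: "0 \<le> B0" using b0 by (simp add: B0_def)
  have "integral\<^sup>L lborel G = C * (\<Sum>\<alpha>\<in>S. \<Sum>j\<in>UNIV. integral\<^sup>L lborel (\<lambda>x::real^'n. indicator {x. b \<le> \<bar>x $ j\<bar>} x * (hermite_multi \<alpha> x)\<^sup>2))"
  proof -
    define h where "h \<alpha> j x = indicator {x::real^'n. b \<le> \<bar>x $ j\<bar>} x * (hermite_multi \<alpha> x)\<^sup>2" for \<alpha> j x
    have hi: "\<alpha> \<in> S \<Longrightarrow> integrable lborel (h \<alpha> j)" for \<alpha> j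
      unfolding h_def by (rule tm)
    have i1: "\<alpha> \<in> S \<Longrightarrow> integrable lborel (\<lambda>x. \<Sum>j\<in>UNIV. h \<alpha> j x)" for \<alpha>
      by (rule Bochner_Integration.integrable_sum) (rule hi)
    have "integral\<^sup>L lborel G = C * integral\<^sup>L lborel (\<lambda>x. \<Sum>\<alpha>\<in>S. \<Sum>j\<in>UNIV. h \<alpha> j x)"
      unfolding G_def h_def by (rule integral_mult_right_zero)
    also have "\<dots> = C * (\<Sum>\<alpha>\<in>S. integral\<^sup>L lborel (\<lambda>x. \<Sum>j\<in>UNIV. h \<alpha> j x))"
      by (subst Bochner_Integration.integral_sum[OF i1]) (assumption, rule refl)
    also have "\<dots> = C * (\<Sum>\<alpha>\<in>S. \<Sum>j\<in>UNIV. integral\<^sup>L lborel (h \<alpha> j))"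
      by (intro arg_cong[where f="\<lambda>t. C * t"] sum.cong refl Bochner_Integration.integral_sum hi)
    finally show ?thesis unfolding h_def .
  qed
  also have "\<dots> \<le> C * (\<Sum>\<alpha>\<in>S. \<Sum>j\<in>UNIV. 3/2 * 8^(\<alpha> j) * B0)"
    using tb C0 unfolding B0_def by (intro mult_left_mono sum_mono) (auto simp: mult.assoc)
  also have "(\<Sum>\<alpha>\<in>S. \<Sum>j\<in>UNIV. 3/2 * 8^(\<alpha> j) * B0) = 3/2 * B0 * (\<Sum>j\<in>UNIV. \<Sum>\<alpha>\<in>S. (8::real)^(\<alpha> j))"
    by (simp add: sum.swap[of _ S UNIV] sum_distrib_left mult_ac)
  also have "\<dots> \<le> 3/2 * B0 * (\<Sum>j\<in>(UNIV::'n set). 2/3 * 2 ^ n * 8 ^ N)"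
    using count_bound B00 unfolding S_def n_def by (intro mult_left_mono sum_mono) auto
  also have "\<dots> = real n * 2 ^ n * 8 ^ N * B0" by (simp add: n_def)
  finally have Gb: "integral\<^sup>L lborel G \<le> C * (real n * 2 ^ n * 8 ^ N * B0)"
    using C0 by (simp add: mult_left_mono)
  have "(LINT x : {x. norm x \<ge> a} | lborel. (cmod (f x))\<^sup>2) = integral\<^sup>L lborel (\<lambda>x. indicator A x * (cmod (f x))\<^sup>2)"
    by (simp add: set_lebesgue_integral_def A_def)
  also have "\<dots> \<le> integral\<^sup>L lborel G"
    using integrable_mult_indicator[OF Am intf] intG pw by (intro integral_mono) auto
  also have "\<dots> \<le> C * (real n * 2 ^ n * 8 ^ N * B0)" by (rule Gb)
  also have "\<dots> = 2 ^ CARD('n) * real CARD('n) powr (3/2) / sqrt pi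
       * (exp (- (a\<^sup>2) / (2 * real CARD('n))) / a) * 8 ^ N
       * (LINT x | lborel. (cmod (f x))\<^sup>2)"
  proof -
    have p32: "real n powr (3/2) = real n * sqrt (real n)"
    proof -
      have "real n powr (3/2) = real n powr (1 + 1/2)"
        by (rule arg_cong[where f="\<lambda>t. real n powr t"]) simp
      also have "\<dots> = real n powr 1 * real n powr (1/2)" by (rule powr_add)
      also have "\<dots> = real n * sqrt (real n)" using n0 by (simp add: powr_half_sqrt)
      finally show ?thesis .
    qed
    define e where "e = exp (- (a\<^sup>2) / (2 * real n))"
    have eb: "exp (- (b\<^sup>2) / 2) = e" by (simp add: b2 e_def)
    have nB: "real n * B0 = real n * sqrt (real n) / sqrt pi * (e / a)"
    proof -
      have "B0 = e / (sqrt pi * b)" unfolding B0_def eb[symmetric] by (rule refl)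
      then show ?thesis unfolding b_def using n0 a0 by (simp add: field_simps)
    qed
    have eq1: "C * (real n * 2^n * 8^N * B0) = (real n * B0) * (2^n * 8^N * C)" by (simp only: mult_ac)
    have eq2: "(real n * B0) * (2^n * 8^N * C) = 2 ^ n * (real n * sqrt (real n)) / sqrt pi * (e / a) * 8 ^ N * C"
      unfolding nB by (simp add: divide_inverse mult_ac)
    show ?thesis unfolding normf n_def[symmetric] p32 e_def[symmetric] by (rule trans[OF eq1 eq2])
  qed
  finally show ?thesis .
qed

end
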